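(* Under the hypotheses of Proposition 3.1 (i.e. $X$ a max-stable random field on $\mathbb R^2$ with unit Fréchet margins, $\mathbf i\in\mathbb R^2$, $\mathbf A\subset\mathbb R^2$ finite nonempty), $$\frac{\sum_{\mathbf j\in\mathbf A}\epsilon_{\{\mathbf i,\mathbf j\}}-|\mathbf A|}{|\mathbf A|+1}\ \le\ SI(\mathbf A,\mathbf i)\ \le\ \frac{\sum_{\mathbf j\in\mathbf A}\epsilon_{\{\mathbf i,\mathbf j\}}-|\mathbf A|}{\max_{\mathbf j\in\mathbf A}\epsilon_{\{\mathbf i,\mathbf j\}}}.$$
   Context: A random field $X=\{X_{\mathbf i}\}_{\mathbf i\in\mathbb R^2}$ is max-stable with unit Fréchet margins if every $X_{\mathbf i}$ has distribution function $F(x)=\exp(-1/x)$, $x>0$, and for every finite set $\mathbf B=\{\mathbf i_1,\dots,\mathbf i_k\}\subset\mathbb R^2$ the joint distribution is a multivariate extreme value distribution $P(X_{\mathbf i_1}\le x_1,\dots,X_{\mathbf i_k}\le x_k)=\exp(-V_{\mathbf B}(x_1,\dots,x_k))$, $x_j>0$, where the exponent function $V_{\mathbf B}$ is homogeneous of order $-1$. The extremal coefficient of $\mathbf B$ is $\epsilon_{\mathbf B}=V_{\mathbf B}(1,\dots,1)$, so that $P(X_{\mathbf k}\le x\ \forall \mathbf k\in\mathbf B)=\exp(-\epsilon_{\mathbf B}/x)$ for $x>0$. For $u\in(0,1)$ let $N_u(\mathbf A,\mathbf i)=\sum_{\mathbf j\in\mathbf A}\mathbf 1_{\{F(X_{\mathbf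 i})\le u<F(X_{\mathbf j})\}}$. The stability index of $\mathbf A$ associated with $\mathbf i$ is $$SI(\mathbf A,\mathbf i)=\lim_{u\uparrow1}\frac{E\big(N_u(\mathbf A,\mathbf i)\big)}{1-P\big(F(X_{\mathbf i})\le u,\ F(X_{\mathbf j})\le u\ \forall\mathbf j\in\mathbf A\big)}.$$ *)

theory Defs
  imports "HOL-Probability.Probability"
begin

type_synonym site = "real^2"

definition frechet_cdf :: "real \<Rightarrow> real" where
  "frechet_cdf x = (if x > 0 then exp (- 1 / x) else 0)"

definition max_stable_frechet :: "'a measure \<Rightarrow> (site \<Rightarrow> 'a \<Rightarrow> real) \<Rightarrow> bool" where
  "max_stable_frechet M X \<longleftrightarrow>
     prob_space M \<and>
     (\<forall>k. X k \<in> borel_measurable M) \<and>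
     (\<forall>k x. measure M {\<omega> \<in> space M. X k \<omega> \<le> x} = frechet_cdf x) \<and>
     (\<forall>B. finite B \<and> B \<noteq> {} \<longrightarrow>
        (\<exists>V :: (site \<Rightarrow> real) \<Rightarrow> real.
           (\<forall>x. (\<forall>k\<in>B. x k > 0) \<longrightarrow>
                measure M {\<omega> \<in> space M. \<forall>k\<in>B. X k \<omega> \<le> x k} = exp (- V x)) \<and>
           (\<forall>x c. (\<forall>k\<in>B. x k > 0) \<longrightarrow> c > 0 \<longrightarrow> V (\<lambda>k. c * x k) = V x / c)))"

text \<open>Extremal coefficient: eps_B = V_B(1,...,1), i.e. P(X_k <= 1 for all k in B) = exp(-eps_B).\<close>
definition extremal_coeff :: "'a measure \<Rightarrow> (site \<Rightarrow> 'a \<Rightarrow> real) \<Rightarrow> site set \<Rightarrow> real" where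
  "extremal_coeff M X B = - ln (measure M {\<omega> \<in> space M. \<forall>k\<in>B. X k \<omega> \<le> 1})"

definition expected_N :: "'a measure \<Rightarrow> (site \<Rightarrow> 'a \<Rightarrow> real) \<Rightarrow> site set \<Rightarrow> site \<Rightarrow> real \<Rightarrow> real" where
  "expected_N M X A i u =
     integral\<^sup>L M (\<lambda>\<omega>. \<Sum>j\<in>A. indicator
        {\<omega> \<in> space M. frechet_cdf (X i \<omega>) \<le> u \<and> u < frechet_cdf (X j \<omega>)} \<omega>)"

definition stability_index :: "'a measure \<Rightarrow> (site \<Rightarrow> 'a \<Rightarrow> real) \<Rightarrow> site set \<Rightarrow> site \<Rightarrow> real" where
  "stability_index M X A i =
     Lim (at_left 1) (\<lambda>u. expected_N M X A i u /
        (1 - measure M {\<omega> \<in> space M. frechet_cdf (X i \<omega>) \<le> u \<and>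
                                      (\<forall>j\<in>A. frechet_cdf (X j \<omega>) \<le> u)}))"

end

theory Submission
  imports Defs
begin

lemma frechet_cdf_measurable[measurable]: "frechet_cdf \<in> borel_measurable borel"
  unfolding frechet_cdf_def by measurable

lemma frechet_le_iff:
  assumes "0 < u" "u < 1"
  shows "frechet_cdf y \<le> u \<longleftrightarrow> y \<le> -1 / ln u"
proof -
  have l: "ln u < 0" using assms by simp
  have p: "-1/ln u > 0" using l by (simp add: divide_neg_neg)
  show ?thesis
  proof (cases "y > 0")
    case True
    have "frechet_cdf y \<le> u \<longleftrightarrow> exp (-1/y) \<le> exp (ln u)" using True assms by (simp add: frechet_cdf_def)
    also have "\<dots> \<longleftrightarrow> -1/y \<le> ln u" by simp
    also have "\<dots> \<longleftrightarrow> y \<le> -1/ln u" using True l by (simp add: field_simps)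
    finally show ?thesis .
  next
    case False
    have "y \<le> -1/ln u" using False p by linarith
    thus ?thesis using False assms by (simp add: frechet_cdf_def)
  qed
qed

lemma joint_x:
  assumes ms: "max_stable_frechet M X" and B: "finite B" "B \<noteq> {}" and x: "x > 0"
  shows "measure M {\<omega>\<in>space M. \<forall>k\<in>B. X k \<omega> \<le> x} = exp (- extremal_coeff M X B / x)"
proof -
  obtain V where V1: "\<And>x. (\<forall>k\<in>B. x k > 0) \<Longrightarrow> measure M {\<omega> \<in> space M. \<forall>k\<in>B. X k \<omega> \<le> x k} = exp (- V x)"
     and V2: "\<And>x c. (\<forall>k\<in>B. x k > 0) \<Longrightarrow> c > 0 \<Longrightarrow> V (\<lambda>k. c * x k) = V x / c"
    using ms B unfolding max_stable_frechet_def by blast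
  have e: "extremal_coeff M X B = V (\<lambda>k. 1)"
    using V1[of "\<lambda>k. 1"] unfolding extremal_coeff_def by simp
  have "measure M {\<omega>\<in>space M. \<forall>k\<in>B. X k \<omega> \<le> x} = exp (- V (\<lambda>k. x))"
    using V1[of "\<lambda>k. x"] x by simp
  also have "V (\<lambda>k. x) = V (\<lambda>k. 1) / x" using V2[of "\<lambda>k. 1" x] x by simp
  finally show ?thesis using e by simp
qed

lemma joint_u:
  assumes ms: "max_stable_frechet M X" and B: "finite B" "B \<noteq> {}" and u: "0 < u" "u < 1"
  shows "measure M {\<omega>\<in>space M. \<forall>k\<in>B. frechet_cdf (X k \<omega>) \<le> u} = u powr extremal_coeff M X B"
proof -
  have "{\<omega>\<in>space M. \<forall>k\<in>B. frechet_cdf (X k \<omega>) \<le> u} = {\<omega>\<in>space M. \<forall>k\<in>B. X k \<omega> \<le> -1/ln u}"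
    using frechet_le_iff[OF u] by simp
  moreover have "-1/ln u > 0" using u by (simp add: divide_neg_neg)
  ultimately have "measure M {\<omega>\<in>space M. \<forall>k\<in>B. frechet_cdf (X k \<omega>) \<le> u}
     = exp (- extremal_coeff M X B / (-1/ln u))" using joint_x[OF ms B] by simp
  also have "\<dots> = u powr extremal_coeff M X B" using u by (simp add: powr_def)
  finally show ?thesis .
qed

lemma eps_single:
  assumes ms: "max_stable_frechet M X"
  shows "extremal_coeff M X {i} = 1"
  using ms unfolding extremal_coeff_def max_stable_frechet_def by (simp add: frechet_cdf_def)

lemma eps_mono:
  assumes ms: "max_stable_frechet M X" and C: "finite C" and BC: "B \<subseteq> C" "B \<noteq> {}"
  shows "extremal_coeff M X B \<le> extremal_coeff M X C"
proof -
  interpret prob_space M using ms unfolding max_stable_frechet_def by blast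
  have [measurable]: "\<And>k. X k \<in> borel_measurable M" using ms unfolding max_stable_frechet_def by blast
  have B: "finite B" "B \<noteq> {}" using C BC finite_subset by blast+
  have C': "C \<noteq> {}" using BC by blast
  have "measure M {\<omega>\<in>space M. \<forall>k\<in>C. X k \<omega> \<le> 1} \<le> measure M {\<omega>\<in>space M. \<forall>k\<in>B. X k \<omega> \<le> 1}"
    apply (rule finite_measure_mono)
    using BC apply blast
    using B by measurable
  hence "exp (- extremal_coeff M X C) \<le> exp (- extremal_coeff M X B)"
    using joint_x[OF ms B, of 1] joint_x[OF ms C C', of 1] BC by auto
  thus ?thesis by simp
qed

lemma powr_quot_lim: "((\<lambda>u. (1 - u powr a) / (1 - u)) \<longlongrightarrow> a) (at_left (1::real))"
proof -
  have "((\<lambda>u. u powr a) has_real_derivative a * 1 powr (a - 1)) (at 1)"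
    by (rule has_real_derivative_powr) simp
  hence "((\<lambda>y. (y powr a - 1 powr a) / (y - 1)) \<longlongrightarrow> a) (at 1)"
    by (simp add: has_field_derivative_iff)
  hence "((\<lambda>y. (y powr a - 1 powr a) / (y - 1)) \<longlongrightarrow> a) (at_left 1)"
    by (rule tendsto_mono[OF at_le, rotated]) simp
  moreover have "(y powr a - 1 powr a)/(y-1) = (1 - y powr a)/(1-y)" for y :: real
    by (metis minus_diff_eq minus_divide_divide powr_one_eq_one)
  ultimately show ?thesis by simp
qed

lemma ev01: "eventually (\<lambda>x. x \<in> {0<..<1::real}) (at_left 1)"
  by (rule eventually_at_left_real) simp

lemma eps_le_card:
  assumes ms: "max_stable_frechet M X" and B: "finite B" "B \<noteq> {}"
  shows "extremal_coeff M X B \<le> card B"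
proof -
  interpret prob_space M using ms unfolding max_stable_frechet_def by blast
  have [measurable]: "\<And>k. X k \<in> borel_measurable M" using ms unfolding max_stable_frechet_def by blast
  let ?e = "extremal_coeff M X B"
  have ev: "eventually (\<lambda>u. (1 - u powr ?e) / (1 - u) \<le> card B) (at_left (1::real))"
    using ev01
  proof (rule eventually_mono)
    fix u :: real assume u: "u \<in> {0<..<1}"
    have sing: "measure M {\<omega>\<in>space M. frechet_cdf (X k \<omega>) \<le> u} = u" for k
      using joint_u[OF ms, of "{k}" u] u eps_single[OF ms] by simp
    have mB: "{\<omega>\<in>space M. \<forall>k\<in>B. frechet_cdf (X k \<omega>) \<le> u} \<in> sets M" using B(1) by measurable
    have mk: "\<And>k. space M - {\<omega>\<in>space M. frechet_cdf (X k \<omega>) \<le> u} \<in> sets M" by measurable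
    have "space M - {\<omega>\<in>space M. \<forall>k\<in>B. frechet_cdf (X k \<omega>) \<le> u}
          \<subseteq> (\<Union>k\<in>B. space M - {\<omega>\<in>space M. frechet_cdf (X k \<omega>) \<le> u})" by blast
    hence "measure M (space M - {\<omega>\<in>space M. \<forall>k\<in>B. frechet_cdf (X k \<omega>) \<le> u})
          \<le> measure M (\<Union>k\<in>B. space M - {\<omega>\<in>space M. frechet_cdf (X k \<omega>) \<le> u})"
    proof (rule finite_measure_mono)
      have "\<And>k. space M - {\<omega>\<in>space M. frechet_cdf (X k \<omega>) \<le> u} \<in> sets M" by measurable
      thus "(\<Union>k\<in>B. space M - {\<omega>\<in>space M. frechet_cdf (X k \<omega>) \<le> u}) \<in> sets M"
        using B by (intro sets.finite_UN) auto
    qed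
    also have "\<dots> \<le> (\<Sum>k\<in>B. measure M (space M - {\<omega>\<in>space M. frechet_cdf (X k \<omega>) \<le> u}))"
      using B mk by (intro finite_measure_subadditive_finite) auto
    also have "\<dots> = (\<Sum>k\<in>B. 1 - u)"
      by (intro sum.cong refl) (simp add: prob_compl sing)
    finally have "1 - u powr ?e \<le> card B * (1 - u)"
      using joint_u[OF ms B, of u] u prob_compl[OF mB] by simp
    thus "(1 - u powr ?e) / (1 - u) \<le> card B" using u by (simp add: divide_le_eq)
  qed
  show ?thesis
    by (rule tendsto_upperbound[OF powr_quot_lim ev]) simp
qed

theorem proposition3p2:
  fixes M :: "'a measure" and X :: "site \<Rightarrow> 'a \<Rightarrow> real" and A :: "site set" and i :: site
  assumes "max_stable_frechet M X"
    and "finite A" and "A \<noteq> {}"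
  shows "((\<Sum>j\<in>A. extremal_coeff M X {i, j}) - real (card A)) / (real (card A) + 1)
           \<le> stability_index M X A i \<and>
         stability_index M X A i
           \<le> ((\<Sum>j\<in>A. extremal_coeff M X {i, j}) - real (card A))
               / (MAX j\<in>A. extremal_coeff M X {i, j})"

proof -
  note ms = assms(1)
  interpret prob_space M using ms unfolding max_stable_frechet_def by blast
  have [measurable]: "\<And>k. X k \<in> borel_measurable M" using ms unfolding max_stable_frechet_def by blast
  define e where "e j = extremal_coeff M X {i, j}" for j
  define eB where "eB = extremal_coeff M X (insert i A)"
  define S where "S = (\<Sum>j\<in>A. e j) - real (card A)"
  have fB: "finite (insert i A)" using assms by simp
  have eB1: "eB \<ge> 1"
    using eps_mono[OF ms fB, of "{i}"] eps_single[OF ms, of i] unfolding eB_def by simp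
  have e1: "e j \<ge> 1" for j
    using eps_mono[OF ms _ , of "{i,j}" "{i}"] eps_single[OF ms, of i] unfolding e_def by simp
  have ejB: "e j \<le> eB" if "j \<in> A" for j
    using eps_mono[OF ms fB, of "{i,j}"] that unfolding e_def eB_def by auto
  have eBc: "eB \<le> real (card A) + 1"
  proof -
    have "card (insert i A) \<le> Suc (card A)" using assms(2) by (simp add: card_insert_if)
    hence "real (card (insert i A)) \<le> real (card A) + 1" by linarith
    thus ?thesis using eps_le_card[OF ms fB insert_not_empty] unfolding eB_def by linarith
  qed
  have S0: "S \<ge> 0"
  proof -
    have "(\<Sum>j\<in>A. (1::real)) \<le> (\<Sum>j\<in>A. e j)" by (intro sum_mono e1)
    thus ?thesis unfolding S_def by simp
  qed
  define g where "g u = (\<Sum>j\<in>A. (1 - u powr e j) / (1 - u) - 1) / ((1 - u powr eB) / (1 - u))" for u :: real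
  have gl: "(g \<longlongrightarrow> (\<Sum>j\<in>A. e j - 1) / eB) (at_left 1)"
    unfolding g_def using eB1
    by (intro tendsto_divide tendsto_sum tendsto_diff powr_quot_lim tendsto_const) auto
  have Sdef: "(\<Sum>j\<in>A. e j - 1) = S" unfolding S_def by (simp add: sum_subtractf)
  have ev: "eventually (\<lambda>u. g u = expected_N M X A i u /
        (1 - measure M {\<omega> \<in> space M. frechet_cdf (X i \<omega>) \<le> u \<and>
                                      (\<forall>j\<in>A. frechet_cdf (X j \<omega>) \<le> u)})) (at_left (1::real))"
    using ev01
  proof (rule eventually_mono)
    fix u :: real assume u: "u \<in> {0<..<1}"
    hence u0: "0 < u" "u < 1" by auto
    have sing: "measure M {\<omega>\<in>space M. frechet_cdf (X k \<omega>) \<le> u} = u" for k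
      using joint_u[OF ms, of "{k}" u] u eps_single[OF ms] by simp
    have pair: "measure M {\<omega>\<in>space M. frechet_cdf (X i \<omega>) \<le> u \<and> frechet_cdf (X j \<omega>) \<le> u} = u powr e j" for j
      using joint_u[OF ms, of "{i,j}" u] u unfolding e_def by simp
    have den: "measure M {\<omega> \<in> space M. frechet_cdf (X i \<omega>) \<le> u \<and>
                                      (\<forall>j\<in>A. frechet_cdf (X j \<omega>) \<le> u)} = u powr eB"
      using joint_u[OF ms fB _ u0] unfolding eB_def by simp
    have trm: "measure M {\<omega> \<in> space M. frechet_cdf (X i \<omega>) \<le> u \<and> u < frechet_cdf (X j \<omega>)}
        = u - u powr e j" for j
    proof -
      have "{\<omega> \<in> space M. frechet_cdf (X i \<omega>) \<le> u \<and> u < frechet_cdf (X j \<omega>)}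
          = {\<omega>\<in>space M. frechet_cdf (X i \<omega>) \<le> u} - {\<omega>\<in>space M. frechet_cdf (X i \<omega>) \<le> u \<and> frechet_cdf (X j \<omega>) \<le> u}"
        by auto
      also have "measure M \<dots> = u - u powr e j"
        by (subst finite_measure_Diff) (auto simp: sing pair)
      finally show ?thesis .
    qed
    have EN: "expected_N M X A i u = (\<Sum>j\<in>A. u - u powr e j)"
      unfolding expected_N_def
      by (subst Bochner_Integration.integral_sum) (auto simp: integrable_indicator_iff trm Int_absorb2 less_top[symmetric])
    have ne: "1 - u powr eB \<noteq> 0" using powr_le_one_le[of u eB] u0 eB1 by linarith
    have "g u = ((\<Sum>j\<in>A. u - u powr e j) / (1 - u)) / ((1 - u powr eB) / (1 - u))"
      unfolding g_def sum_divide_distrib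
      by (intro arg_cong2[where f="(/)"] sum.cong refl) (use u0 in \<open>simp add: field_simps\<close>)
    also have "\<dots> = (\<Sum>j\<in>A. u - u powr e j) / (1 - u powr eB)" using u0 ne by simp
    finally show "g u = expected_N M X A i u /
        (1 - measure M {\<omega> \<in> space M. frechet_cdf (X i \<omega>) \<le> u \<and>
                                      (\<forall>j\<in>A. frechet_cdf (X j \<omega>) \<le> u)})"
      using EN den by simp
  qed
  have SI: "stability_index M X A i = S / eB"
    unfolding stability_index_def
    by (rule tendsto_Lim) (use tendsto_cong[OF ev] gl Sdef in auto)
  have MX: "(MAX j\<in>A. extremal_coeff M X {i, j}) = Max (e ` A)" unfolding e_def by simp
  obtain j0 where j0: "j0 \<in> A" "Max (e ` A) = e j0"
  proof -
    have "Max (e ` A) \<in> e ` A" using assms(2,3) by (intro Max_in) auto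
    thus ?thesis using that by auto
  qed
  have m1: "Max (e ` A) \<ge> 1" using j0 e1 by simp
  have mB: "Max (e ` A) \<le> eB" using j0 ejB by simp
  have "S / (real (card A) + 1) \<le> S / eB"
    using S0 eB1 eBc by (intro divide_left_mono) auto
  moreover have "S / eB \<le> S / Max (e ` A)"
    using S0 m1 mB by (intro divide_left_mono) auto
  ultimately show ?thesis unfolding SI MX by (simp add: S_def e_def)
qed


end
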